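(* Let $X=(x_t,t\ge 0)$ and $Y=(y_t,t\ge0)$ be real-valued stochastic processes with continuous paths on a probability space $(\Omega,\mathcal F,\mathbb P)$. Assume $Y$ is strictly stationary and ergodic, and that $|x_t-y_t|\to 0$ almost surely as $t\to\infty$. Let $p\ge 1$ be an integer and $g\in\mathcal C^p(\mathbb R)$ with $k$-th derivative $g^{(k)}$, such that $\mathbb E|g^{(k)}(y_0)|<\infty$ for $k=0,1,\dots,p$, and $g^{(p)}$ is globally Lipschitz. Then $$\frac1T\int_0^T g(x_t)\,dt \longrightarrow \mathbb E\, g(y_0)\quad\text{almost surely as } T\to\infty.$$
   Context: "Strictly stationary and ergodic" is used in the sense that for every measurable $\varphi:\mathbb R\to\mathbb R$ with $\mathbb E|\varphi(y_0)|<\infty$ one has $\frac1T\int_0^T\varphi(y_t)\,dt\to\mathbb E\varphi(y_0)$ almost surely. *)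

theory Defs
  imports "HOL-Probability.Probability"
begin

definition time_avg :: "(real \<Rightarrow> real) \<Rightarrow> real \<Rightarrow> real" where
  "time_avg f T = (1 / T) * (LINT t:{0..T}|lborel. f t)"

definition strictly_stationary :: "'a measure \<Rightarrow> (real \<Rightarrow> 'a \<Rightarrow> real) \<Rightarrow> bool" where
  "strictly_stationary M y \<longleftrightarrow>
     (\<forall>n::nat. \<forall>ts::nat \<Rightarrow> real. \<forall>h::real.
        (\<forall>i<n. 0 \<le> ts i) \<longrightarrow> 0 \<le> h \<longrightarrow>
        distr M (PiM {..<n} (\<lambda>_. borel)) (\<lambda>\<omega>. \<lambda>i\<in>{..<n}. y (ts i + h) \<omega>)
        = distr M (PiM {..<n} (\<lambda>_. borel)) (\<lambda>\<omega>. \<lambda>i\<in>{..<n}. y (ts i) \<omega>))"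

definition ergodic_process :: "'a measure \<Rightarrow> (real \<Rightarrow> 'a \<Rightarrow> real) \<Rightarrow> bool" where
  "ergodic_process M y \<longleftrightarrow>
     (\<forall>\<phi> \<in> borel_measurable (borel :: real measure).
        integrable M (\<lambda>\<omega>. \<phi> (y 0 \<omega>)) \<longrightarrow>
        (AE \<omega> in M. ((\<lambda>T. time_avg (\<lambda>t. \<phi> (y t \<omega>)) T)
                       \<longlongrightarrow> (\<integral>\<omega>. \<phi> (y 0 \<omega>) \<partial>M)) at_top))"

definition Ck_real :: "nat \<Rightarrow> (real \<Rightarrow> real) \<Rightarrow> bool" where
  "Ck_real p g \<longleftrightarrow>
     (\<forall>k<p. \<forall>t. ((deriv ^^ k) g has_real_derivative (deriv ^^ Suc k) g t) (at t))
     \<and> continuous_on UNIV ((deriv ^^ p) g)"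

end

theory Submission imports Defs begin
lemma mvt_bound:
  fixes f f' :: "real \<Rightarrow> real"
  assumes d: "\<And>t. (f has_real_derivative f' t) (at t)"
    and b: "\<And>z. \<bar>z - y\<bar> \<le> \<bar>h\<bar> \<Longrightarrow> \<bar>f' z\<bar> \<le> B"
  shows "\<bar>f (y + h) - f y\<bar> \<le> \<bar>h\<bar> * B"
proof (cases h "0::real" rule: linorder_cases)
  case less
  obtain z where z: "y + h < z" "z < y" "f y - f (y + h) = (y - (y + h)) * f' z"
    using MVT2[of "y+h" y f f'] less d by auto
  have "\<bar>f (y + h) - f y\<bar> = \<bar>h\<bar> * \<bar>f' z\<bar>" using z(3) by (simp add: abs_mult abs_minus_commute)
  also have "\<dots> \<le> \<bar>h\<bar> * B" using b[of z] z less by (intro mult_left_mono) auto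
  finally show ?thesis .
next
  case equal then show ?thesis using b[of y] by simp
next
  case greater
  obtain z where z: "y < z" "z < y + h" "f (y + h) - f y = (y + h - y) * f' z"
    using MVT2[of y "y+h" f f'] greater d by auto
  have "\<bar>f (y + h) - f y\<bar> = \<bar>h\<bar> * \<bar>f' z\<bar>" using z(3) by (simp add: abs_mult)
  also have "\<dots> \<le> \<bar>h\<bar> * B" using b[of z] z greater by (intro mult_left_mono) auto
  finally show ?thesis .
qed

lemma deriv_chain_bound:
  fixes D :: "nat \<Rightarrow> real \<Rightarrow> real"
  assumes d: "\<And>k t. k < p \<Longrightarrow> (D k has_real_derivative D (Suc k) t) (at t)"
    and lip: "L-lipschitz_on UNIV (D p)"
  shows "j \<le> p \<Longrightarrow> \<bar>h\<bar> \<le> 1 \<Longrightarrow> \<bar>D j (y + h) - D j y\<bar> \<le> \<bar>h\<bar> * ((\<Sum>k\<in>{j<..p}. \<bar>D k y\<bar>) + L)"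
proof (induction "p - j" arbitrary: j h y)
  case 0
  then have "j = p" by simp
  have "dist (D p (y + h)) (D p y) \<le> L * dist (y + h) y" by (rule lipschitz_onD[OF lip]) auto
  then show ?case using \<open>j = p\<close> by (simp add: dist_real_def mult.commute)
next
  case (Suc n)
  then have jp: "j < p" by simp
  have L0: "0 \<le> L" using lipschitz_on_nonneg[OF lip] .
  let ?S = "(\<Sum>k\<in>{Suc j<..p}. \<bar>D k y\<bar>) + L"
  have S0: "0 \<le> ?S" using L0 by (simp add: sum_nonneg)
  have "\<bar>D j (y + h) - D j y\<bar> \<le> \<bar>h\<bar> * (\<bar>D (Suc j) y\<bar> + ?S)"
  proof (rule mvt_bound)
    show "(D j has_real_derivative D (Suc j) t) (at t)" for t using d jp by blast
  next
    fix z assume z: "\<bar>z - y\<bar> \<le> \<bar>h\<bar>"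
    have ih: "\<bar>D (Suc j) (y + (z - y)) - D (Suc j) y\<bar> \<le> \<bar>z - y\<bar> * ?S"
      using Suc.hyps(1)[of "Suc j" "z - y" y] Suc.hyps(2) jp z Suc.prems by auto
    have "\<bar>z - y\<bar> * ?S \<le> 1 * ?S" using z Suc.prems S0 by (intro mult_right_mono) auto
    then show "\<bar>D (Suc j) z\<bar> \<le> \<bar>D (Suc j) y\<bar> + ?S" using ih by simp
  qed
  moreover have "{j<..p} = insert (Suc j) {Suc j<..p}" using jp by auto
  ultimately show ?case by (simp add: add.assoc)
qed

lemma det:
  fixes X Y G C :: "real \<Rightarrow> real"
  assumes cX: "continuous_on {0..} X" and cY: "continuous_on {0..} Y"
    and cG: "continuous_on UNIV G" and cC: "continuous_on UNIV C" and C0: "\<And>z. 0 \<le> C z"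
    and lip: "\<And>a b. \<bar>a - b\<bar> \<le> 1 \<Longrightarrow> \<bar>G a - G b\<bar> \<le> \<bar>a - b\<bar> * C b"
    and conv: "((\<lambda>t. \<bar>X t - Y t\<bar>) \<longlongrightarrow> 0) at_top"
    and lY: "((\<lambda>T. time_avg (\<lambda>t. G (Y t)) T) \<longlongrightarrow> l) at_top"
    and mY: "((\<lambda>T. time_avg (\<lambda>t. C (Y t)) T) \<longlongrightarrow> m) at_top"
  shows "((\<lambda>T. time_avg (\<lambda>t. G (X t)) T) \<longlongrightarrow> l) at_top"
proof -
  have cGX: "continuous_on {0..T} (\<lambda>t. G (X t))" for T
    by (rule continuous_on_compose2[OF cG continuous_on_subset[OF cX]]) auto
  have cGY: "continuous_on {0..T} (\<lambda>t. G (Y t))" for T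
    by (rule continuous_on_compose2[OF cG continuous_on_subset[OF cY]]) auto
  have cCY: "continuous_on {0..T} (\<lambda>t. C (Y t))" for T
    by (rule continuous_on_compose2[OF cC continuous_on_subset[OF cY]]) auto
  have iGX: "set_integrable lborel {0..T} (\<lambda>t. G (X t))" for T
    by (rule borel_integrable_atLeastAtMost'[OF cGX])
  have iGY: "set_integrable lborel {0..T} (\<lambda>t. G (Y t))" for T
    by (rule borel_integrable_atLeastAtMost'[OF cGY])
  have iCY: "set_integrable lborel {0..T} (\<lambda>t. C (Y t))" for T
    by (rule borel_integrable_atLeastAtMost'[OF cCY])
  have diff: "((\<lambda>T. time_avg (\<lambda>t. G (X t)) T - time_avg (\<lambda>t. G (Y t)) T) \<longlongrightarrow> 0) at_top"
    unfolding tendsto_iff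
  proof (intro allI impI)
    fix \<epsilon> :: real assume e: "0 < \<epsilon>"
    define \<delta> where "\<delta> = min 1 (\<epsilon> / (2 * (\<bar>m\<bar> + 1)))"
    have d0: "0 < \<delta>" "\<delta> \<le> 1" using e by (auto simp: \<delta>_def)
    have dm: "\<delta> * (\<bar>m\<bar> + 1) \<le> \<epsilon> / 2"
    proof -
      have "\<delta> * (\<bar>m\<bar> + 1) \<le> (\<epsilon> / (2 * (\<bar>m\<bar> + 1))) * (\<bar>m\<bar> + 1)"
        by (intro mult_right_mono) (auto simp: \<delta>_def)
      also have "\<dots> = \<epsilon> / 2" by (simp add: field_simps)
      finally show ?thesis .
    qed
    have "eventually (\<lambda>t. dist \<bar>X t - Y t\<bar> 0 < \<delta>) at_top"
      using conv d0 unfolding tendsto_iff by blast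
    then obtain T1 where T1: "\<And>t. t \<ge> T1 \<Longrightarrow> \<bar>X t - Y t\<bar> < \<delta>"
      unfolding eventually_at_top_linorder by auto
    define T0 where "T0 = max T1 0"
    have T00: "0 \<le> T0" by (simp add: T0_def)
    have "compact ((\<lambda>t. \<bar>G (X t) - G (Y t)\<bar>) ` {0..T0})"
      by (intro compact_continuous_image continuous_intros cGX cGY compact_Icc)
    then have "bounded ((\<lambda>t. \<bar>G (X t) - G (Y t)\<bar>) ` {0..T0})" by (rule compact_imp_bounded)
    then obtain K0 where K0': "\<forall>x\<in>(\<lambda>t. \<bar>G (X t) - G (Y t)\<bar>) ` {0..T0}. \<bar>x\<bar> \<le> K0"
      unfolding bounded_real by blast
    have K0: "\<And>t. t \<in> {0..T0} \<Longrightarrow> \<bar>\<bar>G (X t) - G (Y t)\<bar>\<bar> \<le> K0"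
      using K0' by blast
    define K where "K = max K0 0"
    have K: "\<And>t. t \<in> {0..T0} \<Longrightarrow> \<bar>G (X t) - G (Y t)\<bar> \<le> K" "0 \<le> K"
      using K0 by (force simp: K_def)+
    have ev1: "eventually (\<lambda>T. time_avg (\<lambda>t. C (Y t)) T < \<bar>m\<bar> + 1) at_top"
      using order_tendstoD(2)[OF mY] by simp
    have ev2: "eventually (\<lambda>T. T > max T0 (2 * K * T0 / \<epsilon>) + 1) at_top"
      by (rule eventually_gt_at_top)
    show "eventually (\<lambda>T. dist (time_avg (\<lambda>t. G (X t)) T - time_avg (\<lambda>t. G (Y t)) T) 0 < \<epsilon>) at_top"
      using ev1 ev2
    proof eventually_elim
      case (elim T)
      have Tpos: "0 < T" "T0 \<le> T" using elim T00 by auto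
      have KT: "K * T0 / T < \<epsilon> / 2"
      proof -
        have "2 * K * T0 / \<epsilon> < T" using elim by auto
        then have "2 * K * T0 < T * \<epsilon>" using e by (simp add: field_simps)
        then show ?thesis using Tpos by (simp add: field_simps)
      qed
      define B where "B = (\<lambda>t. K * indicator {0..T0} t + \<delta> * C (Y t))"
      have bnd: "\<bar>G (X t) - G (Y t)\<bar> \<le> B t" if t: "t \<in> {0..T}" for t
      proof (cases "t \<le> T0")
        case True
        have "0 \<le> \<delta> * C (Y t)" using C0[of "Y t"] d0 by simp
        then show ?thesis using K(1)[of t] t True by (simp add: B_def)
      next
        case False
        then have "\<bar>X t - Y t\<bar> < \<delta>" using T1 by (simp add: T0_def)
        then have "\<bar>G (X t) - G (Y t)\<bar> \<le> \<bar>X t - Y t\<bar> * C (Y t)" using lip d0 by simp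
        also have "\<dots> \<le> \<delta> * C (Y t)" using \<open>\<bar>X t - Y t\<bar> < \<delta>\<close> C0 by (intro mult_right_mono) auto
        finally show ?thesis using False by (simp add: B_def)
      qed
      have ind_eq: "(\<lambda>t. indicator {0..T} t *\<^sub>R (K * indicator {0..T0} t)) = (\<lambda>t. K * indicator {0..T0} t :: real)"
        using Tpos by (auto simp: indicator_def fun_eq_iff)
      have iK: "set_integrable lborel {0..T} (\<lambda>t. K * indicator {0..T0} t :: real)"
        unfolding set_integrable_def ind_eq by (intro integrable_mult_right integrable_real_indicator) (auto simp: emeasure_lborel_Icc_eq)
      have intK: "(LINT t:{0..T}|lborel. K * indicator {0..T0} t) = K * T0"
      proof -
        have "(LINT t:{0..T}|lborel. K * indicator {0..T0} t) = (LINT t|lborel. K * indicator {0..T0} t)"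
          unfolding set_lebesgue_integral_def ind_eq ..
        also have "\<dots> = K * (LINT t|lborel. indicator {0..T0} t)" by (rule integral_mult_right_zero)
        also have "\<dots> = K * T0" using T00 by simp
        finally show ?thesis .
      qed
      have iB: "set_integrable lborel {0..T} B"
        unfolding B_def by (intro set_integral_add(1) iK set_integrable_mult_right iCY)
      have intB: "(LINT t:{0..T}|lborel. B t) = K * T0 + \<delta> * (LINT t:{0..T}|lborel. C (Y t))"
        unfolding B_def by (subst set_integral_add(2)[OF iK set_integrable_mult_right[OF iCY]], subst intK, simp)
      define I where "I = (LINT t:{0..T}|lborel. G (X t) - G (Y t))"
      define J where "J = (LINT t:{0..T}|lborel. C (Y t))"
      have I_eq: "time_avg (\<lambda>t. G (X t)) T - time_avg (\<lambda>t. G (Y t)) T = I / T"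
        unfolding time_avg_def I_def by (simp add: set_integral_diff(2)[OF iGX iGY] diff_divide_distrib)
      have I1: "I \<le> K * T0 + \<delta> * J"
        unfolding I_def J_def intB[symmetric]
      proof (rule set_integral_mono[OF set_integral_diff(1)[OF iGX iGY] iB])
        fix t assume "t \<in> {0..T}"
        then show "G (X t) - G (Y t) \<le> B t" using bnd[of t] by linarith
      qed
      have I2: "- I \<le> K * T0 + \<delta> * J"
      proof -
        have "(LINT t:{0..T}|lborel. - B t) \<le> I"
          unfolding I_def
        proof (rule set_integral_mono[OF _ set_integral_diff(1)[OF iGX iGY]])
          show "set_integrable lborel {0..T} (\<lambda>t. - B t)"
            using iB unfolding set_integrable_def by simp
          fix t assume "t \<in> {0..T}"
          then show "- B t \<le> G (X t) - G (Y t)" using bnd[of t] by linarith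
        qed
        moreover have "(LINT t:{0..T}|lborel. - B t) = - (LINT t:{0..T}|lborel. B t)"
          unfolding set_lebesgue_integral_def by simp
        ultimately show ?thesis using intB unfolding J_def by linarith
      qed
      have JT: "J / T < \<bar>m\<bar> + 1" using elim unfolding time_avg_def J_def by simp
      have "\<bar>I / T\<bar> \<le> (K * T0 + \<delta> * J) / T" using I1 I2 Tpos by (simp add: divide_right_mono abs_le_iff)
      also have "\<dots> = K * T0 / T + \<delta> * (J / T)" by (simp add: add_divide_distrib)
      also have "\<dots> < \<epsilon> / 2 + \<delta> * (\<bar>m\<bar> + 1)" using KT JT d0 by (intro add_strict_mono mult_strict_left_mono) auto
      also have "\<dots> \<le> \<epsilon>" using dm by simp
      finally show ?case using I_eq by (simp add: dist_real_def)
    qed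
  qed
  from tendsto_add[OF diff lY] show ?thesis by simp
qed

theorem theorem3p2:
  fixes M :: "'a measure" and x y :: "real \<Rightarrow> 'a \<Rightarrow> real"
    and g :: "real \<Rightarrow> real" and p :: nat
  assumes "prob_space M"
    and "\<And>t. x t \<in> borel_measurable M"
    and "\<And>t. y t \<in> borel_measurable M"
    and "\<And>\<omega>. \<omega> \<in> space M \<Longrightarrow> continuous_on {0..} (\<lambda>t. x t \<omega>)"
    and "\<And>\<omega>. \<omega> \<in> space M \<Longrightarrow> continuous_on {0..} (\<lambda>t. y t \<omega>)"
    and "strictly_stationary M y"
    and "ergodic_process M y"
    and "AE \<omega> in M. ((\<lambda>t. \<bar>x t \<omega> - y t \<omega>\<bar>) \<longlongrightarrow> 0) at_top"
    and "p \<ge> 1"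
    and "Ck_real p g"
    and "\<And>k. k \<le> p \<Longrightarrow> integrable M (\<lambda>\<omega>. (deriv ^^ k) g (y 0 \<omega>))"
    and "\<exists>L. L-lipschitz_on UNIV ((deriv ^^ p) g)"
  shows "AE \<omega> in M. ((\<lambda>T. time_avg (\<lambda>t. g (x t \<omega>)) T)
                       \<longlongrightarrow> (\<integral>\<omega>. g (y 0 \<omega>) \<partial>M)) at_top"
proof -
  interpret P: prob_space M by (rule assms(1))
  obtain L where lip: "L-lipschitz_on UNIV ((deriv ^^ p) g)" using assms(12) by blast
  have L0: "0 \<le> L" using lipschitz_on_nonneg[OF lip] .
  define D where "D = (\<lambda>k. (deriv ^^ k) g)"
  have dD: "\<And>k t. k < p \<Longrightarrow> (D k has_real_derivative D (Suc k) t) (at t)"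
    using assms(10) unfolding Ck_real_def D_def by blast
  have cD: "continuous_on UNIV (D k)" if "k \<le> p" for k
  proof (cases "k = p")
    case True then show ?thesis using assms(10) unfolding Ck_real_def D_def by blast
  next
    case False
    then have "k < p" using that by simp
    then show ?thesis using dD
      by (intro continuous_at_imp_continuous_on) (blast intro: DERIV_isCont)
  qed
  have lipD: "L-lipschitz_on UNIV (D p)" using lip by (simp add: D_def)
  define C where "C = (\<lambda>z. (\<Sum>k\<in>{0<..p}. \<bar>D k z\<bar>) + L)"
  have C0: "\<And>z. 0 \<le> C z" using L0 by (simp add: C_def sum_nonneg)
  have cC: "continuous_on UNIV C" unfolding C_def
    by (intro continuous_intros cD) auto
  have cG: "continuous_on UNIV g" using cD[of 0] by (simp add: D_def)
  have lipG: "\<bar>g a - g b\<bar> \<le> \<bar>a - b\<bar> * C b" if "\<bar>a - b\<bar> \<le> 1" for a b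
    using deriv_chain_bound[OF dD lipD, of 0 "a - b" b] that by (simp add: D_def C_def)
  have intC: "integrable M (\<lambda>\<omega>. C (y 0 \<omega>))"
    unfolding C_def
    by (intro Bochner_Integration.integrable_add Bochner_Integration.integrable_sum integrable_abs
        P.integrable_const) (use assms(11) in \<open>auto simp: D_def\<close>)
  have intG: "integrable M (\<lambda>\<omega>. g (y 0 \<omega>))" using assms(11)[of 0] by simp
  have mC: "C \<in> borel_measurable borel" by (rule borel_measurable_continuous_onI[OF cC])
  have mG: "g \<in> borel_measurable borel" by (rule borel_measurable_continuous_onI[OF cG])
  have ergC: "AE \<omega> in M. ((\<lambda>T. time_avg (\<lambda>t. C (y t \<omega>)) T) \<longlongrightarrow> (\<integral>\<omega>. C (y 0 \<omega>) \<partial>M)) at_top"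
    using assms(7) mC intC unfolding ergodic_process_def by blast
  have ergG: "AE \<omega> in M. ((\<lambda>T. time_avg (\<lambda>t. g (y t \<omega>)) T) \<longlongrightarrow> (\<integral>\<omega>. g (y 0 \<omega>) \<partial>M)) at_top"
    using assms(7) mG intG unfolding ergodic_process_def by blast
  from assms(8) ergC ergG AE_space show ?thesis
  proof eventually_elim
    case (elim \<omega>)
    show ?case
      by (rule det[OF assms(4)[OF elim(4)] assms(5)[OF elim(4)] cG cC C0 lipG elim(1) elim(3) elim(2)])
  qed
qed

end
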